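(* Let $k$ be a positive integer and let $T = (V, E)$ be a $k$-good graph. Then there exists a multiset $\mathbf{Msets}$ of subsets of $V$ such that: (a) for any two different members $X, Y$ of $\mathbf{Msets}$, $|X \cap Y| < 2$; (b) every $X \in \mathbf{Msets}$ is a clique in $T$; (c) for every $u \in V$, there are exactly $k$ members $X$ of $\mathbf{Msets}$ (counted with multiplicity) with $u \in X$; (d) for every edge $uv \in E$, there is exactly one member $X \in \mathbf{Msets}$ with $u, v \in X$.
   Context: A finite simple undirected graph $T$ is $k$-good if for every vertex $u$ of $T$, the neighbourhood $N_T(u)$ can be partitioned into $k$ pairwise disjoint (possibly empty) subsets $S_1(u), \dots, S_k(u)$ such that each nonempty $S_i(u)$ is a clique of $T$ and no edge of $T$ joins a vertex of $S_i(u)$ to a vertex of $S_j(u)$ for distinct $i,j$. *)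

theory Defs
  imports Main "HOL-Library.Multiset"
begin

definition simple_graph :: "'a set \<Rightarrow> ('a \<Rightarrow> 'a \<Rightarrow> bool) \<Rightarrow> bool" where
  "simple_graph V E \<longleftrightarrow> finite V \<and> (\<forall>u v. E u v \<longrightarrow> u \<in> V \<and> v \<in> V)
     \<and> (\<forall>u v. E u v \<longrightarrow> E v u) \<and> (\<forall>u. \<not> E u u)"

definition nbhd :: "('a \<Rightarrow> 'a \<Rightarrow> bool) \<Rightarrow> 'a \<Rightarrow> 'a set" where
  "nbhd E u = {v. E u v}"

definition is_clique :: "'a set \<Rightarrow> ('a \<Rightarrow> 'a \<Rightarrow> bool) \<Rightarrow> 'a set \<Rightarrow> bool" where
  "is_clique V E X \<longleftrightarrow> X \<subseteq> V \<and> (\<forall>x\<in>X. \<forall>y\<in>X. x \<noteq> y \<longrightarrow> E x y)"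

definition k_good :: "nat \<Rightarrow> 'a set \<Rightarrow> ('a \<Rightarrow> 'a \<Rightarrow> bool) \<Rightarrow> bool" where
  "k_good k V E \<longleftrightarrow> (\<forall>u\<in>V. \<exists>S :: nat \<Rightarrow> 'a set.
      (\<Union>i\<in>{1..k}. S i) = nbhd E u
    \<and> (\<forall>i\<in>{1..k}. \<forall>j\<in>{1..k}. i \<noteq> j \<longrightarrow> S i \<inter> S j = {})
    \<and> (\<forall>i\<in>{1..k}. S i \<noteq> {} \<longrightarrow> is_clique V E (S i))
    \<and> (\<forall>i\<in>{1..k}. \<forall>j\<in>{1..k}. i \<noteq> j \<longrightarrow> (\<forall>x\<in>S i. \<forall>y\<in>S j. \<not> E x y)))"

end

theory Submission
  imports Defs
begin

definition Kc :: "('a \<Rightarrow> 'a \<Rightarrow> bool) \<Rightarrow> 'a \<Rightarrow> 'a \<Rightarrow> 'a set" where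
  "Kc E u v = {u, v} \<union> {w. E u w \<and> E v w}"

lemma Kc_sym: "Kc E u v = Kc E v u"
  unfolding Kc_def by auto

lemma clique_edge: "is_clique V E X \<Longrightarrow> x \<in> X \<Longrightarrow> y \<in> X \<Longrightarrow> x \<noteq> y \<Longrightarrow> E x y"
  unfolding is_clique_def by blast

lemma clique_sub_Kc:
  assumes "is_clique V E C" "a \<in> C" "b \<in> C" "a \<noteq> b"
  shows "C \<subseteq> Kc E a b"
  using assms unfolding is_clique_def Kc_def by auto

lemma Kc_L1:
  assumes g: "simple_graph V E"
    and hS: "\<forall>u\<in>V. (\<Union>i\<in>{1..k}. S u i) = nbhd E u
    \<and> (\<forall>i\<in>{1..k}. \<forall>j\<in>{1..k}. i \<noteq> j \<longrightarrow> S u i \<inter> S u j = {})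
    \<and> (\<forall>i\<in>{1..k}. S u i \<noteq> {} \<longrightarrow> is_clique V E (S u i))
    \<and> (\<forall>i\<in>{1..k}. \<forall>j\<in>{1..k}. i \<noteq> j \<longrightarrow> (\<forall>x\<in>S u i. \<forall>y\<in>S u j. \<not> E x y))"
    and e: "E u v"
  shows "\<exists>i\<in>{1..k}. Kc E u v = insert u (S u i)"
proof -
  have uV: "u \<in> V" using g e unfolding simple_graph_def by blast
  have P1: "(\<Union>i\<in>{1..k}. S u i) = nbhd E u"
    and P3: "\<And>i. i\<in>{1..k} \<Longrightarrow> S u i \<noteq> {} \<Longrightarrow> is_clique V E (S u i)"
    and P4: "\<And>i j x y. i\<in>{1..k} \<Longrightarrow> j\<in>{1..k} \<Longrightarrow> i \<noteq> j \<Longrightarrow> x\<in>S u i \<Longrightarrow> y\<in>S u j \<Longrightarrow> \<not> E x y"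
    using hS uV by auto
  have "v \<in> nbhd E u" using e unfolding nbhd_def by simp
  then obtain i where i: "i \<in> {1..k}" "v \<in> S u i" using P1 by blast
  have cl: "is_clique V E (S u i)" using P3 i by blast
  have "Kc E u v = insert u (S u i)"
  proof
    show "Kc E u v \<subseteq> insert u (S u i)"
    proof
      fix w assume w: "w \<in> Kc E u v"
      show "w \<in> insert u (S u i)"
      proof (cases "w = u \<or> w = v")
        case True then show ?thesis using i by auto
      next
        case False
        then have "E u w" "E v w" using w unfolding Kc_def by auto
        then have "w \<in> nbhd E u" unfolding nbhd_def by simp
        then obtain j where j: "j \<in> {1..k}" "w \<in> S u j" using P1 by blast
        have "j = i"
        proof (rule ccontr)
          assume "j \<noteq> i"
          then have "\<not> E v w" using P4[of i j v w] i j by blast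
          then show False using \<open>E v w\<close> by simp
        qed
        then show ?thesis using j by simp
      qed
    qed
  next
    show "insert u (S u i) \<subseteq> Kc E u v"
    proof
      fix w assume w: "w \<in> insert u (S u i)"
      show "w \<in> Kc E u v"
      proof (cases "w = u \<or> w = v")
        case True then show ?thesis unfolding Kc_def by auto
      next
        case False
        then have ws: "w \<in> S u i" using w by simp
        then have "w \<in> nbhd E u" using P1 i by blast
        then have "E u w" unfolding nbhd_def by simp
        moreover have "E v w" using clique_edge[OF cl i(2) ws] False by blast
        ultimately show ?thesis unfolding Kc_def by simp
      qed
    qed
  qed
  then show ?thesis using i by blast
qed

lemma Kc_clique:
  assumes g: "simple_graph V E"
    and hS: "\<forall>u\<in>V. (\<Union>i\<in>{1..k}. S u i) = nbhd E u
    \<and> (\<forall>i\<in>{1..k}. \<forall>j\<in>{1..k}. i \<noteq> j \<longrightarrow> S u i \<inter> S u j = {})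
    \<and> (\<forall>i\<in>{1..k}. S u i \<noteq> {} \<longrightarrow> is_clique V E (S u i))
    \<and> (\<forall>i\<in>{1..k}. \<forall>j\<in>{1..k}. i \<noteq> j \<longrightarrow> (\<forall>x\<in>S u i. \<forall>y\<in>S u j. \<not> E x y))"
    and e: "E u v"
  shows "is_clique V E (Kc E u v)"
proof -
  have uV: "u \<in> V" using g e unfolding simple_graph_def by blast
  have P1: "(\<Union>i\<in>{1..k}. S u i) = nbhd E u"
    and P3: "\<And>i. i\<in>{1..k} \<Longrightarrow> S u i \<noteq> {} \<Longrightarrow> is_clique V E (S u i)"
    using hS uV by auto
  obtain i where i: "i \<in> {1..k}" "Kc E u v = insert u (S u i)"
    using Kc_L1[OF g hS e] by blast
  have "v \<in> Kc E u v" by (simp add: Kc_def)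
  then have vi: "v \<in> insert u (S u i)" using i(2) by simp
  have "u \<noteq> v" using g e unfolding simple_graph_def by blast
  then have "v \<in> S u i" using vi by simp
  then have cl: "is_clique V E (S u i)" using P3 i by blast
  have nb: "\<forall>w\<in>S u i. E u w" using P1 i unfolding nbhd_def by blast
  have sym: "\<forall>a b. E a b \<longrightarrow> E b a" using g unfolding simple_graph_def by blast
  have sub: "S u i \<subseteq> V" using cl unfolding is_clique_def by blast
  show ?thesis unfolding i(2) is_clique_def
  proof (intro conjI ballI impI)
    show "insert u (S u i) \<subseteq> V" using sub uV by blast
  next
    fix x y assume x: "x \<in> insert u (S u i)" and y: "y \<in> insert u (S u i)" and xy: "x \<noteq> y"
    show "E x y"
    proof (cases "x = u")
      case True then show ?thesis using nb y xy by auto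
    next
      case False
      then have xs: "x \<in> S u i" using x by simp
      show ?thesis
      proof (cases "y = u")
        case True then show ?thesis using nb xs sym by auto
      next
        case False
        then have "y \<in> S u i" using y by simp
        then show ?thesis using clique_edge[OF cl xs _ xy] by blast
      qed
    qed
  qed
qed

lemma Kc_unique:
  assumes g: "simple_graph V E"
    and hS: "\<forall>u\<in>V. (\<Union>i\<in>{1..k}. S u i) = nbhd E u
    \<and> (\<forall>i\<in>{1..k}. \<forall>j\<in>{1..k}. i \<noteq> j \<longrightarrow> S u i \<inter> S u j = {})
    \<and> (\<forall>i\<in>{1..k}. S u i \<noteq> {} \<longrightarrow> is_clique V E (S u i))
    \<and> (\<forall>i\<in>{1..k}. \<forall>j\<in>{1..k}. i \<noteq> j \<longrightarrow> (\<forall>x\<in>S u i. \<forall>y\<in>S u j. \<not> E x y))"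
    and e: "E u v" and x: "x \<in> Kc E u v" and y: "y \<in> Kc E u v" and xy: "x \<noteq> y"
  shows "Kc E x y = Kc E u v"
proof -
  have c1: "is_clique V E (Kc E u v)" by (rule Kc_clique[OF g hS e])
  have s1: "Kc E u v \<subseteq> Kc E x y" by (rule clique_sub_Kc[OF c1 x y xy])
  have exy: "E x y" using c1 x y xy unfolding is_clique_def by blast
  have c2: "is_clique V E (Kc E x y)" by (rule Kc_clique[OF g hS exy])
  have uv: "u \<noteq> v" using g e unfolding simple_graph_def by blast
  have "u \<in> Kc E u v" "v \<in> Kc E u v" unfolding Kc_def by auto
  then have s2: "Kc E x y \<subseteq> Kc E u v"
    using clique_sub_Kc[OF c2 _ _ uv] s1 by blast
  show ?thesis using s1 s2 by blast
qed

lemma in_sum_rep: "finite A \<Longrightarrow> X \<in># (\<Sum>w\<in>A. replicate_mset (f w) {w}) \<Longrightarrow> \<exists>w\<in>A. X = {w}"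
  by (induction A rule: finite_induct) (auto split: if_splits)

lemma filter_rep: "filter_mset P (replicate_mset n x) = (if P x then replicate_mset n x else {#})"
  by (induction n) auto

lemma filter_mset_sum:
  "finite A \<Longrightarrow> filter_mset P (\<Sum>w\<in>A. f w) = (\<Sum>w\<in>A. filter_mset P (f w))"
  by (induction A rule: finite_induct) auto

theorem proposition4p6:
  fixes k :: nat and V :: "'a set" and E :: "'a \<Rightarrow> 'a \<Rightarrow> bool"
  assumes "k \<ge> 1" and "simple_graph V E" and "k_good k V E"
  shows "\<exists>Msets :: 'a set multiset.
            (\<forall>X\<in>#Msets. X \<subseteq> V)
          \<and> (\<forall>X\<in>#Msets. \<forall>Y\<in>#(Msets - {#X#}). card (X \<inter> Y) < 2)
          \<and> (\<forall>X\<in>#Msets. is_clique V E X)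
          \<and> (\<forall>u\<in>V. size (filter_mset (\<lambda>X. u \<in> X) Msets) = k)
          \<and> (\<forall>u v. E u v \<longrightarrow> size (filter_mset (\<lambda>X. u \<in> X \<and> v \<in> X) Msets) = 1)"
proof -
  note g = assms(2)
  have "\<forall>u\<in>V. \<exists>S :: nat \<Rightarrow> 'a set. (\<Union>i\<in>{1..k}. S i) = nbhd E u
    \<and> (\<forall>i\<in>{1..k}. \<forall>j\<in>{1..k}. i \<noteq> j \<longrightarrow> S i \<inter> S j = {})
    \<and> (\<forall>i\<in>{1..k}. S i \<noteq> {} \<longrightarrow> is_clique V E (S i))
    \<and> (\<forall>i\<in>{1..k}. \<forall>j\<in>{1..k}. i \<noteq> j \<longrightarrow> (\<forall>x\<in>S i. \<forall>y\<in>S j. \<not> E x y))"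
    using assms(3) unfolding k_good_def by blast
  from bchoice[OF this] obtain S where hS: "\<forall>u\<in>V. (\<Union>i\<in>{1..k}. S u i) = nbhd E u
    \<and> (\<forall>i\<in>{1..k}. \<forall>j\<in>{1..k}. i \<noteq> j \<longrightarrow> S u i \<inter> S u j = {})
    \<and> (\<forall>i\<in>{1..k}. S u i \<noteq> {} \<longrightarrow> is_clique V E (S u i))
    \<and> (\<forall>i\<in>{1..k}. \<forall>j\<in>{1..k}. i \<noteq> j \<longrightarrow> (\<forall>x\<in>S u i. \<forall>y\<in>S u j. \<not> E x y))"
    by blast
  have finV: "finite V" and inV: "\<forall>u v. E u v \<longrightarrow> u \<in> V \<and> v \<in> V"
    and sym: "\<forall>u v. E u v \<longrightarrow> E v u" and irr: "\<forall>u. \<not> E u u"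
    using g unfolding simple_graph_def by auto
  define Cl where "Cl = {Kc E u v | u v. E u v}"
  have Clcl: "\<And>X. X \<in> Cl \<Longrightarrow> is_clique V E X"
    unfolding Cl_def using Kc_clique[OF g hS] by blast
  have ClPow: "Cl \<subseteq> Pow V" using Clcl unfolding is_clique_def by blast
  have finCl: "finite Cl" using finite_subset[OF ClPow] finV by blast
  have Cl2: "\<And>X. X \<in> Cl \<Longrightarrow> \<exists>a b. a \<in> X \<and> b \<in> X \<and> a \<noteq> b"
    unfolding Cl_def Kc_def using irr by blast
  have ClU: "\<And>X x y. X \<in> Cl \<Longrightarrow> x \<in> X \<Longrightarrow> y \<in> X \<Longrightarrow> x \<noteq> y \<Longrightarrow> X = Kc E x y"
    unfolding Cl_def using Kc_unique[OF g hS] by blast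
  define m where "m u = card {X \<in> Cl. u \<in> X}" for u
  have mk: "m u \<le> k" if "u \<in> V" for u
  proof -
    have "{X \<in> Cl. u \<in> X} \<subseteq> (\<lambda>i. insert u (S u i)) ` {1..k}"
    proof
      fix X assume X: "X \<in> {X \<in> Cl. u \<in> X}"
      then obtain a b where ab: "a \<in> X" "b \<in> X" "a \<noteq> b" using Cl2 by blast
      then obtain w where w: "w \<in> X" "w \<noteq> u" by blast
      have XK: "X = Kc E u w" using ClU X w by blast
      have XC: "X \<in> Cl" "u \<in> X" using X by auto
      have "is_clique V E X" using Clcl[OF XC(1)] .
      then have "E u w" using XC(2) w clique_edge by metis
      from Kc_L1[OF g hS this] obtain i where "i \<in> {1..k}" "Kc E u w = insert u (S u i)" by blast
      then show "X \<in> (\<lambda>i. insert u (S u i)) ` {1..k}"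
        using XK by blast
    qed
    then have "m u \<le> card ((\<lambda>i. insert u (S u i)) ` {1..k})"
      unfolding m_def by (simp add: card_mono)
    also have "\<dots> \<le> k" using card_image_le[of "{1..k}"] by simp
    finally show ?thesis .
  qed
  define Sg where "Sg = (\<Sum>w\<in>V. replicate_mset (k - m w) {w})"
  define M where "M = mset_set Cl + Sg"
  have inSg: "X \<in># Sg \<Longrightarrow> \<exists>w\<in>V. X = {w}" for X
    unfolding Sg_def using in_sum_rep[OF finV, of X "\<lambda>w. k - m w"] by blast
  have cntSg: "count Sg X = 0" if "a \<in> X" "b \<in> X" "a \<noteq> b" for X a b
  proof -
    have "X \<notin># Sg" using inSg that by blast
    then show ?thesis by (simp add: not_in_iff)
  qed
  have MX: "X \<in> Cl \<or> (\<exists>w\<in>V. X = {w})" if "X \<in># M" for X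
  proof -
    have "X \<in># mset_set Cl \<or> X \<in># Sg" using that unfolding M_def by simp
    then show ?thesis using inSg finCl by (meson elem_mset_set)
  qed
  have P1: "\<forall>X\<in>#M. X \<subseteq> V"
  proof
    fix X assume "X \<in># M"
    then show "X \<subseteq> V" using MX[of X] ClPow by blast
  qed
  have P3: "\<forall>X\<in>#M. is_clique V E X"
  proof
    fix X assume "X \<in># M"
    then show "is_clique V E X" using MX[of X] Clcl unfolding is_clique_def by blast
  qed
  have P2: "\<forall>X\<in>#M. \<forall>Y\<in>#(M - {#X#}). card (X \<inter> Y) < 2"
  proof (intro ballI)
    fix X Y assume X: "X \<in># M" and Y: "Y \<in># M - {#X#}"
    show "card (X \<inter> Y) < 2"
    proof (rule ccontr)
      assume "\<not> card (X \<inter> Y) < 2"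
      then have c2: "2 \<le> card (X \<inter> Y)" by simp
      then have fin: "finite (X \<inter> Y)" by (metis card.infinite not_numeral_le_zero)
      have "\<not> card (X \<inter> Y) \<le> Suc 0" using c2 by simp
      then have "\<not> (\<forall>a\<in>X \<inter> Y. \<forall>b\<in>X \<inter> Y. a = b)" using card_le_Suc0_iff_eq[OF fin] by blast
      then obtain x y where xy: "x \<in> X \<inter> Y" "y \<in> X \<inter> Y" "x \<noteq> y" by blast
      have Ym: "Y \<in># M" using Y by (meson in_diffD)
      have XC: "X \<in> Cl" using MX[OF X] xy by auto
      have YC: "Y \<in> Cl" using MX[OF Ym] xy by auto
      have "X = Kc E x y" using ClU[OF XC, of x y] xy by blast
      moreover have "Y = Kc E x y" using ClU[OF YC, of x y] xy by blast
      ultimately have "X = Y" by simp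
      have "count M X = 1" using XC finCl cntSg[of x X y] xy unfolding M_def by simp
      then have "count (M - {#X#}) Y = 0" using \<open>X = Y\<close> by simp
      then show False using Y by (metis count_eq_zero_iff)
    qed
  qed
  have P4: "\<forall>u\<in>V. size (filter_mset (\<lambda>X. u \<in> X) M) = k"
  proof
    fix u assume u: "u \<in> V"
    have "filter_mset (\<lambda>X. u \<in> X) Sg = (\<Sum>w\<in>V. filter_mset (\<lambda>X. u \<in> X) (replicate_mset (k - m w) {w}))"
      unfolding Sg_def using finV by (rule filter_mset_sum)
    also have "\<dots> = (\<Sum>w\<in>V. if w = u then replicate_mset (k - m u) {u} else {#})"
      by (rule sum.cong) (auto simp: filter_rep)
    also have "\<dots> = replicate_mset (k - m u) {u}" using u finV by simp
    finally have "filter_mset (\<lambda>X. u \<in> X) Sg = replicate_mset (k - m u) {u}" .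
    moreover have "size (filter_mset (\<lambda>X. u \<in> X) (mset_set Cl)) = m u"
      unfolding m_def using finCl by simp
    ultimately have "size (filter_mset (\<lambda>X. u \<in> X) M) = m u + (k - m u)"
      unfolding M_def by (simp only: filter_union_mset size_union size_replicate_mset)
    then show "size (filter_mset (\<lambda>X. u \<in> X) M) = k" using mk[OF u] by simp
  qed
  have P5: "\<forall>u v. E u v \<longrightarrow> size (filter_mset (\<lambda>X. u \<in> X \<and> v \<in> X) M) = 1"
  proof (intro allI impI)
    fix u v assume e: "E u v"
    have uv: "u \<noteq> v" using e irr by blast
    have "filter_mset (\<lambda>X. u \<in> X \<and> v \<in> X) Sg = (\<Sum>w\<in>V. filter_mset (\<lambda>X. u \<in> X \<and> v \<in> X) (replicate_mset (k - m w) {w}))"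
      unfolding Sg_def using finV by (rule filter_mset_sum)
    also have "\<dots> = (\<Sum>w\<in>V. {#})"
      by (rule sum.cong) (use uv in \<open>auto simp: filter_rep\<close>)
    finally have F: "filter_mset (\<lambda>X. u \<in> X \<and> v \<in> X) Sg = {#}" by simp
    have "{X \<in> Cl. u \<in> X \<and> v \<in> X} = {Kc E u v}"
    proof
      show "{X \<in> Cl. u \<in> X \<and> v \<in> X} \<subseteq> {Kc E u v}" using ClU uv by blast
      show "{Kc E u v} \<subseteq> {X \<in> Cl. u \<in> X \<and> v \<in> X}"
        using e unfolding Cl_def Kc_def by blast
    qed
    then have "size (filter_mset (\<lambda>X. u \<in> X \<and> v \<in> X) (mset_set Cl)) = 1"
      using finCl by simp
    then show "size (filter_mset (\<lambda>X. u \<in> X \<and> v \<in> X) M) = 1"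
      unfolding M_def using F by (simp only: filter_union_mset size_union size_empty)
  qed
  show ?thesis by (rule exI[of _ M]) (intro conjI P1 P2 P3 P4 P5)
qed

end
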